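(* Let $N,K\ge1$, $T\ge1$, $\phi_r\in\mathbb{R}$, $\sigma_r^2>0$. For $t=1,\dots,T$ independently let $\theta_t\sim\mathcal{N}(\phi_r,\sigma_r^2)$, and conditionally on $\theta_t$ let $x_{t,1},\dots,x_{t,N}$ and $y_{t,1},\dots,y_{t,K}$ be independent $\mathcal{N}(\theta_t,1)$. Define $$\ell_t^{\mathrm{tr}}(\theta_t,\phi,\sigma^2)=\tfrac12\log\sigma^2+\frac{(\theta_t-\phi)^2}{2\sigma^2}+\tfrac12\sum_{n=1}^N(x_{t,n}-\theta_t)^2,\qquad \ell_{\mathrm{joint}}=\sum_{t=1}^T\ell_t^{\mathrm{tr}},\qquad \ell_t^{\mathrm{val}}(\theta_t)=\tfrac12\sum_{k=1}^K(y_{t,k}-\theta_t)^2.$$ For $\sigma^2>0$ let $(\hat\phi(\sigma^2),\hat\theta_{1:T}(\sigma^2))$ be the minimizer of $\ell_{\mathrm{joint}}(\theta_{1:T},\phi,\sigma^2)$ over $(\phi,\theta_{1:T})$. Define the approximate gradient $$g(\sigma^2)=-\sum_{t=1}^T\frac{\partial\ell_t^{\mathrm{val}}}{\partial\theta_t}(\theta_t)\Big(\frac{\partial^2\ell_t^{\mathrm{tr}}}{\partial\theta_t^2}\Big)^{-1}\frac{\partial^2\ell_t^{\mathrm{tr}}}{\partial\theta_t\,\partial\sigma^2}$$ evaluated at $\theta_t=\hat\theta_t(\sigma^2)$, $\phi=\hat\phi(\sigma^2)$ (i.e. treating $\phi$ as a constant, ignoring the dependence of $\hat\phi$ on $\sigma^2$),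 and let $\hat\sigma^2$ be the solution of $g(\sigma^2)=0$. Then, as $T\to\infty$, $\hat\phi(\hat\sigma^2)\to\phi_r$ and $\hat\sigma^2\to\sigma_r^2$ in probability.
   Context: $\ell_{\mathrm{joint}}$ is, up to an additive constant, the negative joint log-density of task parameters and training data given $(\phi,\sigma^2)$; $\ell_t^{\mathrm{val}}$ is, up to a constant, the negative log-likelihood of the validation data of task $t$. *)

theory Defs
  imports "HOL-Probability.Probability"
begin

text \<open>Tasks are indexed by t < T, training points by n < N, validation points by k < K.
  x t n and y t k denote (realised) observations.\<close>

definition l_tr :: "nat \<Rightarrow> (nat \<Rightarrow> nat \<Rightarrow> real) \<Rightarrow> nat \<Rightarrow> real \<Rightarrow> real \<Rightarrow> real \<Rightarrow> real" where
  "l_tr N x t \<theta> \<phi> s = ln s / 2 + (\<theta> - \<phi>)\<^sup>2 / (2 * s) + (1/2) * (\<Sum>n<N. (x t n - \<theta>)\<^sup>2)"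

definition l_joint :: "nat \<Rightarrow> (nat \<Rightarrow> nat \<Rightarrow> real) \<Rightarrow> nat \<Rightarrow> (nat \<Rightarrow> real) \<Rightarrow> real \<Rightarrow> real \<Rightarrow> real" where
  "l_joint N x T \<theta>s \<phi> s = (\<Sum>t<T. l_tr N x t (\<theta>s t) \<phi> s)"

definition l_val :: "nat \<Rightarrow> (nat \<Rightarrow> nat \<Rightarrow> real) \<Rightarrow> nat \<Rightarrow> real \<Rightarrow> real" where
  "l_val K y t \<theta> = (1/2) * (\<Sum>k<K. (y t k - \<theta>)\<^sup>2)"

definition is_joint_min :: "nat \<Rightarrow> (nat \<Rightarrow> nat \<Rightarrow> real) \<Rightarrow> nat \<Rightarrow> real \<Rightarrow> real \<Rightarrow> (nat \<Rightarrow> real) \<Rightarrow> bool" where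
  "is_joint_min N x T s \<phi> \<theta>s \<longleftrightarrow>
     (\<forall>\<phi>' \<theta>s'. l_joint N x T \<theta>s \<phi> s \<le> l_joint N x T \<theta>s' \<phi>' s)"

definition approx_grad ::
  "nat \<Rightarrow> nat \<Rightarrow> (nat \<Rightarrow> nat \<Rightarrow> real) \<Rightarrow> (nat \<Rightarrow> nat \<Rightarrow> real) \<Rightarrow> nat \<Rightarrow> real \<Rightarrow> (nat \<Rightarrow> real) \<Rightarrow> real \<Rightarrow> real" where
  "approx_grad N K x y T \<phi> \<theta>s s =
     - (\<Sum>t<T. deriv (l_val K y t) (\<theta>s t)
              * inverse (deriv (deriv (\<lambda>\<theta>. l_tr N x t \<theta> \<phi> s)) (\<theta>s t))
              * deriv (\<lambda>s'. deriv (\<lambda>\<theta>. l_tr N x t \<theta> \<phi> s') (\<theta>s t)) s)"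

definition estimate_good ::
  "nat \<Rightarrow> nat \<Rightarrow> (nat \<Rightarrow> nat \<Rightarrow> real) \<Rightarrow> (nat \<Rightarrow> nat \<Rightarrow> real) \<Rightarrow> nat \<Rightarrow> real \<Rightarrow> real \<Rightarrow> real \<Rightarrow> bool" where
  "estimate_good N K x y T \<phi>r \<sigma>r2 \<epsilon> \<longleftrightarrow>
     (\<exists>s>0. \<exists>\<phi> \<theta>s. is_joint_min N x T s \<phi> \<theta>s \<and> approx_grad N K x y T \<phi> \<theta>s s = 0) \<and>
     (\<forall>s>0. \<forall>\<phi> \<theta>s. is_joint_min N x T s \<phi> \<theta>s \<and> approx_grad N K x y T \<phi> \<theta>s s = 0 \<longrightarrow>
        \<bar>\<phi> - \<phi>r\<bar> < \<epsilon> \<and> \<bar>s - \<sigma>r2\<bar> < \<epsilon>)"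

text \<open>Index set for the independent building blocks of the model.\<close>
datatype obs_idx = Task nat | Tr nat nat | Val nat nat

definition obs_indices :: "nat \<Rightarrow> nat \<Rightarrow> obs_idx set" where
  "obs_indices N K = range Task \<union> {Tr t n | t n. n < N} \<union> {Val t k | t k. k < K}"

definition obs_family ::
  "(nat \<Rightarrow> 'a \<Rightarrow> real) \<Rightarrow> (nat \<Rightarrow> nat \<Rightarrow> 'a \<Rightarrow> real) \<Rightarrow> (nat \<Rightarrow> nat \<Rightarrow> 'a \<Rightarrow> real)
     \<Rightarrow> obs_idx \<Rightarrow> 'a \<Rightarrow> real" where
  "obs_family \<theta> x y i = (case i of
      Task t \<Rightarrow> \<theta> t
    | Tr t n \<Rightarrow> (\<lambda>\<omega>. x t n \<omega> - \<theta> t \<omega>)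
    | Val t k \<Rightarrow> (\<lambda>\<omega>. y t k \<omega> - \<theta> t \<omega>))"

end

theory Submission
  imports Defs
begin

lemma sum_sq_expand:
  fixes X :: "nat \<Rightarrow> real"
  shows "(\<Sum>n<N. (X n - a)\<^sup>2) = (\<Sum>n<N. (X n)\<^sup>2) - 2 * a * (\<Sum>n<N. X n) + real N * a\<^sup>2"
  by (simp add: power2_diff sum.distrib sum_subtractf sum_distrib_left sum_distrib_right algebra_simps)

lemma l_tr_closed:
  "l_tr N X t \<theta> \<phi> s = ln s / 2 + (\<theta> - \<phi>)\<^sup>2 * inverse (2 * s)
     + (1/2) * ((\<Sum>n<N. (X t n)\<^sup>2) - 2 * \<theta> * (\<Sum>n<N. X t n) + real N * \<theta>\<^sup>2)"
proof -
  have e: "(\<theta> - \<phi>)\<^sup>2 / (2 * s) = (\<theta> - \<phi>)\<^sup>2 * inverse (2 * s)" by (rule divide_inverse)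
  show ?thesis unfolding l_tr_def sum_sq_expand e ..
qed

lemma l_val_closed:
  "l_val K Y t \<theta> = (1/2) * ((\<Sum>k<K. (Y t k)\<^sup>2) - 2 * \<theta> * (\<Sum>k<K. Y t k) + real K * \<theta>\<^sup>2)"
  unfolding l_val_def sum_sq_expand by simp

lemma deriv_l_val: "deriv (l_val K Y t) \<theta> = real K * \<theta> - (\<Sum>k<K. Y t k)"
proof -
  have "(l_val K Y t has_real_derivative (real K * \<theta> - (\<Sum>k<K. Y t k))) (at \<theta>)"
    unfolding l_val_closed[abs_def]
    by (auto intro!: derivative_eq_intros simp: algebra_simps)
  then show ?thesis by (rule DERIV_imp_deriv)
qed

lemma deriv_l_tr: "deriv (\<lambda>\<theta>. l_tr N X t \<theta> \<phi> s) = (\<lambda>\<theta>. (\<theta> - \<phi>) * inverse s + real N * \<theta> - (\<Sum>n<N. X t n))"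
proof
  fix \<theta>
  have "((\<lambda>\<theta>. l_tr N X t \<theta> \<phi> s) has_real_derivative ((\<theta> - \<phi>) * inverse s + real N * \<theta> - (\<Sum>n<N. X t n))) (at \<theta>)"
    unfolding l_tr_closed
    by (auto intro!: derivative_eq_intros simp: inverse_mult_distrib) algebra
  then show "deriv (\<lambda>\<theta>. l_tr N X t \<theta> \<phi> s) \<theta> = (\<theta> - \<phi>) * inverse s + real N * \<theta> - (\<Sum>n<N. X t n)" by (rule DERIV_imp_deriv)
qed

lemma deriv2_l_tr: "deriv (deriv (\<lambda>\<theta>. l_tr N X t \<theta> \<phi> s)) \<theta> = inverse s + real N"
proof -
  have "((deriv (\<lambda>\<theta>. l_tr N X t \<theta> \<phi> s)) has_real_derivative (inverse s + real N)) (at \<theta>)"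
    unfolding deriv_l_tr
    by (auto intro!: derivative_eq_intros simp: algebra_simps)
  then show ?thesis by (rule DERIV_imp_deriv)
qed

lemma deriv_mixed: assumes "s > 0"
  shows "deriv (\<lambda>s'. deriv (\<lambda>\<theta>. l_tr N X t \<theta> \<phi> s') \<theta>) s = - (\<theta> - \<phi>) / s\<^sup>2"
proof -
  have "((\<lambda>s'. deriv (\<lambda>\<theta>. l_tr N X t \<theta> \<phi> s') \<theta>) has_real_derivative (- (\<theta> - \<phi>) / s\<^sup>2)) (at s)"
    unfolding deriv_l_tr
    using assms
    by (auto intro!: derivative_eq_intros simp: field_simps power2_eq_square)
  then show ?thesis by (rule DERIV_imp_deriv)
qed

lemma approx_grad_closed: assumes "s > 0"
  shows "approx_grad N K X Y T \<phi> \<theta>s s =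
     inverse (inverse s + real N) / s\<^sup>2 * (\<Sum>t<T. (real K * \<theta>s t - (\<Sum>k<K. Y t k)) * (\<theta>s t - \<phi>))"
  unfolding approx_grad_def deriv_l_val deriv2_l_tr deriv_mixed[OF assms]
  apply (simp add: sum_distrib_left flip: sum_negf)
  apply (intro sum.cong refl)
  apply (simp add: algebra_simps diff_divide_distrib)
  done

lemma tr_diff:
  assumes s: "s > 0" and st: "a - p = s * ((\<Sum>n<N. X t n) - real N * a)"
  shows "l_tr N X t a' p' s - l_tr N X t a p s =
     ((a' - a) - (p' - p))\<^sup>2 / (2 * s) + real N / 2 * (a' - a)\<^sup>2 - (a - p) * (p' - p) / s"
proof -
  define SX where "SX = (\<Sum>n<N. X t n)"
  define SXX where "SXX = (\<Sum>n<N. (X t n)\<^sup>2)"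
  define i where "i = inverse (2 * s)"
  define R where "R = SX - real N * a"
  have h: "2 * (a - p) * i = R" using s st unfolding i_def R_def SX_def by (simp add: field_simps)
  have d1: "x / (2 * s) = x * i" for x unfolding i_def by (rule divide_inverse)
  have d2: "x / s = 2 * x * i" for x unfolding i_def using s by (simp add: field_simps)
  have "l_tr N X t a' p' s - l_tr N X t a p s =
     ((a' - p')\<^sup>2 * i - (a - p)\<^sup>2 * i)
     + ((1/2) * (SXX - 2 * a' * SX + real N * a'\<^sup>2) - (1/2) * (SXX - 2 * a * SX + real N * a\<^sup>2))"
    unfolding l_tr_closed SX_def SXX_def i_def by simp
  also have "\<dots> = ((a' - a) - (p' - p))\<^sup>2 * i + real N / 2 * (a' - a)\<^sup>2 - 2 * ((a - p) * (p' - p)) * i"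
    using h unfolding R_def by algebra
  finally show ?thesis unfolding d1 d2 .
qed

definition avg :: "nat \<Rightarrow> (nat \<Rightarrow> real) \<Rightarrow> real" where
  "avg n f = (\<Sum>i<n. f i) / real n"

definition ph :: "(nat \<Rightarrow> nat \<Rightarrow> real) \<Rightarrow> nat \<Rightarrow> nat \<Rightarrow> real" where
  "ph X N T = avg T (\<lambda>t. avg N (X t))"

definition th :: "(nat \<Rightarrow> nat \<Rightarrow> real) \<Rightarrow> nat \<Rightarrow> nat \<Rightarrow> real \<Rightarrow> nat \<Rightarrow> real" where
  "th X N T s t = (ph X N T + s * real N * avg N (X t)) / (1 + s * real N)"

lemma th_stat:
  assumes "s > 0" "N \<ge> 1"
  shows "th X N T s t - ph X N T = s * ((\<Sum>n<N. X t n) - real N * th X N T s t)"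
proof -
  have pos: "1 + s * real N > 0" using assms by (simp add: add_pos_nonneg)
  have sx: "(\<Sum>n<N. X t n) = real N * avg N (X t)" using assms by (simp add: avg_def)
  show ?thesis unfolding sx th_def using pos by (simp add: field_simps)
qed

lemma sum_th:
  assumes "s > 0" "T \<ge> 1" "N \<ge> 1"
  shows "(\<Sum>t<T. th X N T s t - ph X N T) = 0"
proof -
  have pos: "1 + s * real N > 0" using assms by (simp add: add_pos_nonneg)
  have "(\<Sum>t<T. th X N T s t) = (\<Sum>t<T. (ph X N T + s * real N * avg N (X t))) / (1 + s * real N)"
    unfolding th_def by (simp add: sum_divide_distrib)
  also have "(\<Sum>t<T. (ph X N T + s * real N * avg N (X t))) = real T * ph X N T + s * real N * (real T * ph X N T)"
  proof -
    have a1: "(\<Sum>t<T. avg N (X t)) = real T * ph X N T" using assms by (simp add: ph_def avg_def)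
    show ?thesis by (simp add: sum.distrib sum_distrib_left[symmetric] a1)
  qed
  also have "real T * ph X N T + s * real N * (real T * ph X N T) = (1 + s * real N) * (real T * ph X N T)"
    by (simp add: algebra_simps)
  finally have "(\<Sum>t<T. th X N T s t) = real T * ph X N T"
    using pos by simp
  then show ?thesis by (simp add: sum_subtractf)
qed

lemma joint_diff:
  assumes s: "s > 0" and N: "N \<ge> 1" and T: "T \<ge> 1"
  shows "l_joint N X T \<theta>s' \<phi>' s - l_joint N X T (th X N T s) (ph X N T) s =
    (\<Sum>t<T. ((\<theta>s' t - th X N T s t) - (\<phi>' - ph X N T))\<^sup>2 / (2 * s) + real N / 2 * (\<theta>s' t - th X N T s t)\<^sup>2)"
proof -
  let ?p = "ph X N T" and ?a = "th X N T s"
  have "l_joint N X T \<theta>s' \<phi>' s - l_joint N X T ?a ?p s = (\<Sum>t<T. l_tr N X t (\<theta>s' t) \<phi>' s - l_tr N X t (?a t) ?p s)"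
    unfolding l_joint_def by (simp add: sum_subtractf)
  also have "\<dots> = (\<Sum>t<T. (((\<theta>s' t - ?a t) - (\<phi>' - ?p))\<^sup>2 / (2 * s) + real N / 2 * (\<theta>s' t - ?a t)\<^sup>2)
        - (?a t - ?p) * ((\<phi>' - ?p) / s))"
  proof (intro sum.cong refl)
    fix t assume "t \<in> {..<T}"
    show "l_tr N X t (\<theta>s' t) \<phi>' s - l_tr N X t (?a t) ?p s = (((\<theta>s' t - ?a t) - (\<phi>' - ?p))\<^sup>2 / (2 * s) + real N / 2 * (\<theta>s' t - ?a t)\<^sup>2)
        - (?a t - ?p) * ((\<phi>' - ?p) / s)"
      using tr_diff[where X=X and t=t, OF s th_stat[OF s N, where X=X and T=T and t=t]] by simp
  qed
  also have "\<dots> = (\<Sum>t<T. ((\<theta>s' t - ?a t) - (\<phi>' - ?p))\<^sup>2 / (2 * s) + real N / 2 * (\<theta>s' t - ?a t)\<^sup>2)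
        - (\<Sum>t<T. ?a t - ?p) * ((\<phi>' - ?p) / s)"
    by (subst sum_distrib_right) (rule sum_subtractf)
  also have "(\<Sum>t<T. ?a t - ?p) = 0" using sum_th[OF s T N] .
  finally show ?thesis by simp
qed

lemma joint_min_iff:
  assumes s: "s > 0" and N: "N \<ge> 1" and T: "T \<ge> 1"
  shows "is_joint_min N X T s \<phi> \<theta>s \<longleftrightarrow> \<phi> = ph X N T \<and> (\<forall>t<T. \<theta>s t = th X N T s t)"
proof -
  let ?p = "ph X N T" and ?a = "th X N T s"
  let ?Q = "\<lambda>\<theta>s' \<phi>'. (\<Sum>t<T. ((\<theta>s' t - ?a t) - (\<phi>' - ?p))\<^sup>2 / (2 * s) + real N / 2 * (\<theta>s' t - ?a t)\<^sup>2)"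
  have Qnn: "?Q \<theta>s' \<phi>' \<ge> 0" for \<theta>s' \<phi>'
    using s by (intro sum_nonneg add_nonneg_nonneg) auto
  have D: "l_joint N X T \<theta>s' \<phi>' s = l_joint N X T ?a ?p s + ?Q \<theta>s' \<phi>'" for \<theta>s' \<phi>'
  proof -
    have "l_joint N X T \<theta>s' \<phi>' s - l_joint N X T ?a ?p s = ?Q \<theta>s' \<phi>'" by (rule joint_diff[OF s N T])
    then show ?thesis by linarith
  qed
  show ?thesis
  proof
    assume m: "is_joint_min N X T s \<phi> \<theta>s"
    then have "l_joint N X T \<theta>s \<phi> s \<le> l_joint N X T ?a ?p s"
      unfolding is_joint_min_def by blast
    then have "?Q \<theta>s \<phi> \<le> 0" using D[of \<theta>s \<phi>] by linarith
    then have Q0: "?Q \<theta>s \<phi> = 0" using Qnn[of \<theta>s \<phi>] by linarith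
    have each: "((\<theta>s t - ?a t) - (\<phi> - ?p))\<^sup>2 / (2 * s) + real N / 2 * (\<theta>s t - ?a t)\<^sup>2 = 0" if "t < T" for t
      using Q0 sum_nonneg_eq_0_iff[of "{..<T}" "\<lambda>t. ((\<theta>s t - ?a t) - (\<phi> - ?p))\<^sup>2 / (2 * s) + real N / 2 * (\<theta>s t - ?a t)\<^sup>2"]
        s that by (auto intro!: add_nonneg_nonneg)
    have th_eq: "\<theta>s t = ?a t" if "t < T" for t
    proof -
      have "real N / 2 * (\<theta>s t - ?a t)\<^sup>2 = 0"
        using each[OF that] s by (smt (verit) divide_nonneg_pos mult_nonneg_nonneg of_nat_0_le_iff zero_le_power2)
      then show ?thesis using N by simp
    qed
    have "((\<theta>s 0 - ?a 0) - (\<phi> - ?p))\<^sup>2 / (2 * s) = 0"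
      using each[of 0] T th_eq[of 0] by simp
    then have "\<phi> = ?p" using th_eq[of 0] T s by simp
    then show "\<phi> = ?p \<and> (\<forall>t<T. \<theta>s t = ?a t)" using th_eq by blast
  next
    assume h: "\<phi> = ?p \<and> (\<forall>t<T. \<theta>s t = ?a t)"
    have "l_joint N X T \<theta>s \<phi> s = l_joint N X T ?a ?p s"
      using h unfolding l_joint_def by (auto intro!: sum.cong)
    then show "is_joint_min N X T s \<phi> \<theta>s"
      unfolding is_joint_min_def
    proof (intro allI)
      fix \<theta>s' \<phi>'
      assume e: "l_joint N X T \<theta>s \<phi> s = l_joint N X T ?a ?p s"
      show "l_joint N X T \<theta>s \<phi> s \<le> l_joint N X T \<theta>s' \<phi>' s"
        using e D[of \<theta>s' \<phi>'] Qnn[of \<theta>s' \<phi>'] by linarith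
    qed
  qed
qed

definition S2 :: "(nat \<Rightarrow> nat \<Rightarrow> real) \<Rightarrow> nat \<Rightarrow> nat \<Rightarrow> real" where
  "S2 X N T = (\<Sum>t<T. (avg N (X t) - ph X N T)\<^sup>2)"

definition S11 :: "(nat \<Rightarrow> nat \<Rightarrow> real) \<Rightarrow> (nat \<Rightarrow> nat \<Rightarrow> real) \<Rightarrow> nat \<Rightarrow> nat \<Rightarrow> nat \<Rightarrow> real" where
  "S11 X Y N K T = (\<Sum>t<T. (avg N (X t) - ph X N T) * (avg K (Y t) - ph X N T))"

lemma grad_term:
  assumes s: "s > 0" and N: "N \<ge> 1" and K: "K \<ge> 1"
  shows "(real K * th X N T s t - (\<Sum>k<K. Y t k)) * (th X N T s t - ph X N T) =
    real K * s * real N / (1 + s * real N)\<^sup>2 *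
      (s * real N * (avg N (X t) - ph X N T)\<^sup>2 - (1 + s * real N) * ((avg N (X t) - ph X N T) * (avg K (Y t) - ph X N T)))"
proof -
  have pos: "1 + s * real N > 0" using s by (simp add: add_pos_nonneg)
  have sy: "(\<Sum>k<K. Y t k) = real K * avg K (Y t)" using K by (simp add: avg_def)
  show ?thesis unfolding sy th_def using pos by (simp add: field_simps power2_eq_square)
qed

lemma grad_zero_iff:
  assumes s: "s > 0" and N: "N \<ge> 1" and K: "K \<ge> 1" and th: "\<forall>t<T. \<theta>s t = th X N T s t"
  shows "approx_grad N K X Y T (ph X N T) \<theta>s s = 0 \<longleftrightarrow>
    s * real N * (S2 X N T - S11 X Y N K T) = S11 X Y N K T"
proof -
  have pos: "1 + s * real N > 0" using s by (simp add: add_pos_nonneg)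
  let ?c = "real K * s * real N / (1 + s * real N)\<^sup>2"
  have c: "?c > 0" using s N K pos by simp
  have i: "inverse (inverse s + real N) / s\<^sup>2 > 0" using s by (simp add: add_pos_nonneg)
  have "approx_grad N K X Y T (ph X N T) \<theta>s s = inverse (inverse s + real N) / s\<^sup>2 *
     (\<Sum>t<T. (real K * th X N T s t - (\<Sum>k<K. Y t k)) * (th X N T s t - ph X N T))"
  proof -
    have ss: "(\<Sum>t<T. (real K * \<theta>s t - (\<Sum>k<K. Y t k)) * (\<theta>s t - ph X N T)) =
      (\<Sum>t<T. (real K * th X N T s t - (\<Sum>k<K. Y t k)) * (th X N T s t - ph X N T))"
      using th by (intro sum.cong) auto
    show ?thesis unfolding approx_grad_closed[OF s] ss ..
  qed
  also have "(\<Sum>t<T. (real K * th X N T s t - (\<Sum>k<K. Y t k)) * (th X N T s t - ph X N T))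
     = ?c * (s * real N * S2 X N T - (1 + s * real N) * S11 X Y N K T)"
    unfolding grad_term[OF s N K] S2_def S11_def
    by (simp only: sum_distrib_left[symmetric] sum_subtractf)
  finally have gform: "approx_grad N K X Y T (ph X N T) \<theta>s s = inverse (inverse s + real N) / s\<^sup>2 * ?c
     * (s * real N * S2 X N T - (1 + s * real N) * S11 X Y N K T)" by simp
  then have "approx_grad N K X Y T (ph X N T) \<theta>s s = 0 \<longleftrightarrow>
     s * real N * S2 X N T - (1 + s * real N) * S11 X Y N K T = 0"
  proof -
    have "inverse (inverse s + real N) / s\<^sup>2 * ?c > 0" using i c by (rule mult_pos_pos)
    then have "inverse (inverse s + real N) / s\<^sup>2 * ?c \<noteq> 0" by linarith
    then show ?thesis using gform by (metis mult_eq_0_iff)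
  qed
  also have "\<dots> \<longleftrightarrow> s * real N * (S2 X N T - S11 X Y N K T) = S11 X Y N K T"
    by (simp add: algebra_simps)
  finally show ?thesis .
qed

lemma sol_iff:
  assumes s: "s > 0" and N: "N \<ge> 1" and K: "K \<ge> 1" and T: "T \<ge> 1"
  shows "(is_joint_min N X T s \<phi> \<theta>s \<and> approx_grad N K X Y T \<phi> \<theta>s s = 0) \<longleftrightarrow>
     \<phi> = ph X N T \<and> (\<forall>t<T. \<theta>s t = th X N T s t) \<and> s * real N * (S2 X N T - S11 X Y N K T) = S11 X Y N K T"
proof
  assume h: "is_joint_min N X T s \<phi> \<theta>s \<and> approx_grad N K X Y T \<phi> \<theta>s s = 0"
  then have m: "\<phi> = ph X N T \<and> (\<forall>t<T. \<theta>s t = th X N T s t)"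
    using joint_min_iff[OF s N T] by simp
  then have "approx_grad N K X Y T (ph X N T) \<theta>s s = 0" using h by simp
  then show "\<phi> = ph X N T \<and> (\<forall>t<T. \<theta>s t = th X N T s t) \<and> s * real N * (S2 X N T - S11 X Y N K T) = S11 X Y N K T"
    using grad_zero_iff[OF s N K] m by simp
next
  assume h: "\<phi> = ph X N T \<and> (\<forall>t<T. \<theta>s t = th X N T s t) \<and> s * real N * (S2 X N T - S11 X Y N K T) = S11 X Y N K T"
  then have "is_joint_min N X T s \<phi> \<theta>s" using joint_min_iff[OF s N T] by simp
  moreover have "approx_grad N K X Y T \<phi> \<theta>s s = 0" using h grad_zero_iff[OF s N K] by simp
  ultimately show "is_joint_min N X T s \<phi> \<theta>s \<and> approx_grad N K X Y T \<phi> \<theta>s s = 0" ..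
qed

lemma real_sol:
  fixes n a b \<sigma> \<epsilon> :: real and Q :: bool
  assumes n: "n > 0"
  shows "((\<exists>s>0. s * n * (a - b) = b) \<and> (\<forall>s>0. s * n * (a - b) = b \<longrightarrow> Q \<and> \<bar>s - \<sigma>\<bar> < \<epsilon>)) \<longleftrightarrow>
     (a \<noteq> b \<and> 0 < b / (n * (a - b)) \<and> Q \<and> \<bar>b / (n * (a - b)) - \<sigma>\<bar> < \<epsilon>)"
proof (cases "a = b")
  case True
  show ?thesis
  proof (cases "b = 0")
    case True
    have "\<not> (\<forall>s>0. s * n * (a - b) = b \<longrightarrow> Q \<and> \<bar>s - \<sigma>\<bar> < \<epsilon>)"
    proof
      assume h: "\<forall>s>0. s * n * (a - b) = b \<longrightarrow> Q \<and> \<bar>s - \<sigma>\<bar> < \<epsilon>"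
      have "\<bar>(\<bar>\<sigma>\<bar> + \<bar>\<epsilon>\<bar> + 1) - \<sigma>\<bar> < \<epsilon>"
        using h[rule_format, of "\<bar>\<sigma>\<bar> + \<bar>\<epsilon>\<bar> + 1"] \<open>a = b\<close> True by simp
      then show False by linarith
    qed
    then show ?thesis using \<open>a = b\<close> by blast
  next
    case False
    then show ?thesis using \<open>a = b\<close> by auto
  qed
next
  case False
  have eq: "s * n * (a - b) = b \<longleftrightarrow> s = b / (n * (a - b))" for s
    using False n by (auto simp: field_simps)
  show ?thesis unfolding eq using False by auto
qed

lemma estimate_good_iff:
  assumes N: "N \<ge> 1" and K: "K \<ge> 1" and T: "T \<ge> 1"
  shows "estimate_good N K X Y T \<phi>r \<sigma>r2 \<epsilon> \<longleftrightarrow>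
    (S2 X N T \<noteq> S11 X Y N K T \<and> 0 < S11 X Y N K T / (real N * (S2 X N T - S11 X Y N K T)) \<and>
     \<bar>ph X N T - \<phi>r\<bar> < \<epsilon> \<and> \<bar>S11 X Y N K T / (real N * (S2 X N T - S11 X Y N K T)) - \<sigma>r2\<bar> < \<epsilon>)"
proof -
  let ?a = "S2 X N T" and ?b = "S11 X Y N K T" and ?Q = "\<bar>ph X N T - \<phi>r\<bar> < \<epsilon>"
  have e1: "(\<exists>s>0. \<exists>\<phi> \<theta>s. is_joint_min N X T s \<phi> \<theta>s \<and> approx_grad N K X Y T \<phi> \<theta>s s = 0)
      \<longleftrightarrow> (\<exists>s>0. s * real N * (?a - ?b) = ?b)"
  proof -
    have "(\<exists>\<phi> \<theta>s. is_joint_min N X T s \<phi> \<theta>s \<and> approx_grad N K X Y T \<phi> \<theta>s s = 0)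
      \<longleftrightarrow> s * real N * (?a - ?b) = ?b" if "s > 0" for s
      unfolding sol_iff[OF that N K T]
    proof
      assume "s * real N * (?a - ?b) = ?b"
      then show "\<exists>\<phi> \<theta>s. \<phi> = ph X N T \<and> (\<forall>t<T. \<theta>s t = th X N T s t) \<and> s * real N * (?a - ?b) = ?b"
        by (intro exI[of _ "ph X N T"] exI[of _ "th X N T s"]) simp
    qed auto
    then show ?thesis by blast
  qed
  have e2: "(\<forall>s>0. \<forall>\<phi> \<theta>s. is_joint_min N X T s \<phi> \<theta>s \<and> approx_grad N K X Y T \<phi> \<theta>s s = 0 \<longrightarrow>
        \<bar>\<phi> - \<phi>r\<bar> < \<epsilon> \<and> \<bar>s - \<sigma>r2\<bar> < \<epsilon>)
      \<longleftrightarrow> (\<forall>s>0. s * real N * (?a - ?b) = ?b \<longrightarrow> ?Q \<and> \<bar>s - \<sigma>r2\<bar> < \<epsilon>)"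
  proof -
    have "(\<forall>\<phi> \<theta>s. is_joint_min N X T s \<phi> \<theta>s \<and> approx_grad N K X Y T \<phi> \<theta>s s = 0 \<longrightarrow>
        \<bar>\<phi> - \<phi>r\<bar> < \<epsilon> \<and> \<bar>s - \<sigma>r2\<bar> < \<epsilon>)
      \<longleftrightarrow> (s * real N * (?a - ?b) = ?b \<longrightarrow> ?Q \<and> \<bar>s - \<sigma>r2\<bar> < \<epsilon>)" if "s > 0" for s
      unfolding sol_iff[OF that N K T]
    proof
      assume h: "\<forall>\<phi> \<theta>s. \<phi> = ph X N T \<and> (\<forall>t<T. \<theta>s t = th X N T s t) \<and> s * real N * (?a - ?b) = ?b \<longrightarrow>
        \<bar>\<phi> - \<phi>r\<bar> < \<epsilon> \<and> \<bar>s - \<sigma>r2\<bar> < \<epsilon>"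
      show "s * real N * (?a - ?b) = ?b \<longrightarrow> ?Q \<and> \<bar>s - \<sigma>r2\<bar> < \<epsilon>"
        using h[rule_format, of "ph X N T" "th X N T s"] by simp
    qed auto
    then show ?thesis by blast
  qed
  have n: "real N > 0" using N by simp
  show ?thesis unfolding estimate_good_def e1 e2 real_sol[OF n] ..
qed

lemma close_bound:
  fixes n \<sigma> \<epsilon> :: real
  assumes n: "n \<ge> 1" and \<sigma>: "\<sigma> > 0" and \<epsilon>: "\<epsilon> > 0"
  shows "\<exists>\<delta>>0. \<forall>mV mW mVV mVW.
     \<bar>mV\<bar> < \<delta> \<and> \<bar>mW\<bar> < \<delta> \<and> \<bar>mVV - (\<sigma> + 1/n)\<bar> < \<delta> \<and> \<bar>mVW - \<sigma>\<bar> < \<delta> \<longrightarrow>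
     (mVV - mV\<^sup>2 - (mVW - mV * mW)) \<noteq> 0 \<and>
     0 < (mVW - mV * mW) / (n * (mVV - mV\<^sup>2 - (mVW - mV * mW))) \<and> \<bar>mV\<bar> < \<epsilon> \<and>
     \<bar>(mVW - mV * mW) / (n * (mVV - mV\<^sup>2 - (mVW - mV * mW))) - \<sigma>\<bar> < \<epsilon>"
proof -
  define \<delta> where "\<delta> = min (min 1 (1 / (8 * n))) (min (\<sigma> / 4) (\<epsilon> / (8 + 8 * n * \<sigma>)))"
  have np: "n > 0" using n by simp
  have d0: "\<delta> > 0" unfolding \<delta>_def using np \<sigma> \<epsilon> by (simp add: add_pos_pos)
  have d1: "\<delta> \<le> 1" unfolding \<delta>_def by (rule min.coboundedI1, rule min.cobounded1)
  have d2: "\<delta> \<le> 1 / (8 * n)" unfolding \<delta>_def by (rule min.coboundedI1, rule min.cobounded2)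
  have d3: "\<delta> \<le> \<sigma> / 4" unfolding \<delta>_def by (rule min.coboundedI2, rule min.cobounded1)
  have d4: "\<delta> \<le> \<epsilon> / (8 + 8 * n * \<sigma>)" unfolding \<delta>_def by (rule min.coboundedI2, rule min.cobounded2)
  have d2': "8 * n * \<delta> \<le> 1" using d2 np by (simp add: field_simps)
  have pos8: "8 + 8 * n * \<sigma> > 0" using np \<sigma> by (simp add: add_pos_pos)
  have d4': "(8 + 8 * n * \<sigma>) * \<delta> \<le> \<epsilon>" using d4 pos8 by (simp add: field_simps)
  have d5: "\<delta> < \<epsilon>"
  proof -
    have "8 * \<delta> \<le> (8 + 8 * n * \<sigma>) * \<delta>" using d0 np \<sigma> by (simp add: algebra_simps)
    then show ?thesis using d4' d0 by linarith
  qed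
  show ?thesis
  proof (rule exI[of _ \<delta>], rule conjI[OF d0], intro allI impI)
    fix mV mW mVV mVW :: real
    assume h: "\<bar>mV\<bar> < \<delta> \<and> \<bar>mW\<bar> < \<delta> \<and> \<bar>mVV - (\<sigma> + 1/n)\<bar> < \<delta> \<and> \<bar>mVW - \<sigma>\<bar> < \<delta>"
    define A where "A = mVW - mV * mW"
    define B where "B = mVV - mV\<^sup>2 - A"
    have pp: "\<bar>mV * mW\<bar> \<le> \<delta>"
    proof -
      have "\<bar>mV * mW\<bar> = \<bar>mV\<bar> * \<bar>mW\<bar>" by (simp add: abs_mult)
      also have "\<dots> \<le> 1 * \<delta>" using h d1 by (intro mult_mono) auto
      finally show ?thesis by simp
    qed
    have sq: "mV\<^sup>2 \<le> \<delta>"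
    proof -
      have "mV\<^sup>2 = \<bar>mV\<bar> * \<bar>mV\<bar>" by (simp add: power2_eq_square abs_mult[symmetric])
      also have "\<dots> \<le> 1 * \<delta>" using h d1 by (intro mult_mono) auto
      finally show ?thesis by simp
    qed
    have A1: "\<bar>A - \<sigma>\<bar> \<le> 2 * \<delta>" unfolding A_def using h pp by linarith
    have A2: "A > 0" using A1 d3 \<sigma> by linarith
    have B1: "\<bar>B - 1/n\<bar> \<le> 4 * \<delta>" using h sq A1 zero_le_power2[of mV] unfolding B_def abs_le_iff abs_less_iff by linarith
    have nB1: "\<bar>n * B - 1\<bar> \<le> 4 * n * \<delta>"
    proof -
      have "n * B - 1 = n * (B - 1/n)" using np by (simp add: field_simps)
      then have "\<bar>n * B - 1\<bar> = n * \<bar>B - 1/n\<bar>" using np by (simp add: abs_mult)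
      also have "\<dots> \<le> n * (4 * \<delta>)" using B1 np by (intro mult_left_mono) auto
      finally show ?thesis by simp
    qed
    have nB2: "n * B \<ge> 1/2" using nB1 d2' by (simp add: abs_le_iff)
    have Bpos: "B > 0"
    proof -
      have "n * B > 0" using nB2 by linarith
      then show ?thesis using np by (simp add: zero_less_mult_iff)
    qed
    have nBp: "n * B > 0" using nB2 by linarith
    have num: "\<bar>A - \<sigma> * (n * B)\<bar> \<le> 2 * \<delta> + 4 * n * \<sigma> * \<delta>"
    proof -
      have e: "A - \<sigma> * (n * B) = (A - \<sigma>) - \<sigma> * (n * B - 1)" by (simp add: algebra_simps)
      have t: "\<bar>(A - \<sigma>) - \<sigma> * (n * B - 1)\<bar> \<le> \<bar>A - \<sigma>\<bar> + \<bar>\<sigma> * (n * B - 1)\<bar>" by (rule abs_triangle_ineq4)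
      have m: "\<bar>\<sigma> * (n * B - 1)\<bar> = \<sigma> * \<bar>n * B - 1\<bar>" using \<sigma> by (simp add: abs_mult)
      have k: "\<sigma> * \<bar>n * B - 1\<bar> \<le> \<sigma> * (4 * n * \<delta>)" using nB1 \<sigma> by (intro mult_left_mono) auto
      have k2: "\<sigma> * (4 * n * \<delta>) = 4 * n * \<sigma> * \<delta>" by (simp add: algebra_simps)
      show ?thesis using e t m k k2 A1 by linarith
    qed
    have q: "\<bar>A / (n * B) - \<sigma>\<bar> = \<bar>A - \<sigma> * (n * B)\<bar> / (n * B)"
    proof -
      have nz: "n * B \<noteq> 0" using nBp by linarith
      have "A / (n * B) - \<sigma> = (A - \<sigma> * (n * B)) / (n * B)" using nz by (simp add: diff_divide_distrib)
      then show ?thesis using nBp by simp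
    qed
    have r: "\<bar>A - \<sigma> * (n * B)\<bar> / (n * B) \<le> 2 * \<bar>A - \<sigma> * (n * B)\<bar>"
    proof -
      have "2 * \<bar>A - \<sigma> * (n * B)\<bar> * (1/2) \<le> 2 * \<bar>A - \<sigma> * (n * B)\<bar> * (n * B)"
        using nB2 by (intro mult_left_mono) auto
      then have "\<bar>A - \<sigma> * (n * B)\<bar> \<le> 2 * \<bar>A - \<sigma> * (n * B)\<bar> * (n * B)" by simp
      then show ?thesis using nBp by (simp add: pos_divide_le_eq)
    qed
    have u: "2 * (2 * \<delta> + 4 * n * \<sigma> * \<delta>) < \<epsilon>"
    proof -
      have "2 * (2 * \<delta> + 4 * n * \<sigma> * \<delta>) = (4 + 8 * n * \<sigma>) * \<delta>" by (simp add: algebra_simps)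
      also have "\<dots> < (8 + 8 * n * \<sigma>) * \<delta>" using d0 by (simp add: algebra_simps)
      finally show ?thesis using d4' by linarith
    qed
    have fin: "\<bar>A / (n * B) - \<sigma>\<bar> < \<epsilon>"
    proof -
      have "\<bar>A / (n * B) - \<sigma>\<bar> \<le> 2 * \<bar>A - \<sigma> * (n * B)\<bar>" using q r by simp
      also have "\<dots> \<le> 2 * (2 * \<delta> + 4 * n * \<sigma> * \<delta>)" using num by simp
      finally show ?thesis using u by simp
    qed
    have "0 < A / (n * B)" using A2 Bpos np by simp
    then show "(mVV - mV\<^sup>2 - (mVW - mV * mW)) \<noteq> 0 \<and>
     0 < (mVW - mV * mW) / (n * (mVV - mV\<^sup>2 - (mVW - mV * mW))) \<and> \<bar>mV\<bar> < \<epsilon> \<and>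
     \<bar>(mVW - mV * mW) / (n * (mVV - mV\<^sup>2 - (mVW - mV * mW))) - \<sigma>\<bar> < \<epsilon>"
      using fin Bpos h d5 unfolding A_def[symmetric] B_def[symmetric] by auto
  qed
qed

lemma (in prob_space) wlln_zero:
  fixes Y :: "nat \<Rightarrow> 'a \<Rightarrow> real"
  assumes rv: "\<And>t. random_variable borel (Y t)"
    and int2: "\<And>t. integrable M (\<lambda>\<omega>. (Y t \<omega>)\<^sup>2)"
    and mean: "\<And>t. expectation (Y t) = 0"
    and bnd: "\<And>t. expectation (\<lambda>\<omega>. (Y t \<omega>)\<^sup>2) \<le> C"
    and ind: "\<And>s t. s \<noteq> t \<Longrightarrow> indep_var borel (Y s) borel (Y t)"
    and d: "\<delta> > 0"
  shows "(\<lambda>T. prob {\<omega> \<in> space M. \<delta> \<le> \<bar>(\<Sum>t<T. Y t \<omega>) / real T\<bar>}) \<longlonglongrightarrow> 0"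
proof -
  have int1: "integrable M (Y t)" for t
    by (rule square_integrable_imp_integrable[OF rv int2])
  have intp: "integrable M (\<lambda>\<omega>. Y s \<omega> * Y t \<omega>)" for s t
  proof (cases "s = t")
    case True then show ?thesis using int2[of t] unfolding power2_eq_square by simp
  next
    case False show ?thesis by (rule indep_var_integrable[OF ind[OF False] int1 int1])
  qed
  have Ep: "expectation (\<lambda>\<omega>. Y s \<omega> * Y t \<omega>) = (if s = t then expectation (\<lambda>\<omega>. (Y t \<omega>)\<^sup>2) else 0)" for s t
  proof (cases "s = t")
    case True then show ?thesis unfolding power2_eq_square by simp
  next
    case False then show ?thesis using indep_var_lebesgue_integral[OF ind[OF False] int1 int1] mean by simp
  qed
  have bound: "prob {\<omega> \<in> space M. \<delta> \<le> \<bar>(\<Sum>t<T. Y t \<omega>) / real T\<bar>} \<le> C / (real T * \<delta>\<^sup>2)" if T: "T \<ge> 1" for T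
  proof -
    define f where "f \<omega> = (\<Sum>t<T. Y t \<omega>) / real T" for \<omega>
    have sq: "(f \<omega>)\<^sup>2 = (\<Sum>s<T. \<Sum>t<T. Y s \<omega> * Y t \<omega>) / (real T)\<^sup>2" for \<omega>
      unfolding f_def by (simp add: power2_eq_square sum_product power_divide)
    have rvf: "random_variable borel f" unfolding f_def using rv by measurable
    have intf2: "integrable M (\<lambda>\<omega>. (f \<omega>)\<^sup>2)" unfolding sq using intp by auto
    have intf: "integrable M f" unfolding f_def using int1 by auto
    have Ef: "expectation f = 0" unfolding f_def using int1 mean by (simp add: Bochner_Integration.integral_sum)
    have Ef2: "expectation (\<lambda>\<omega>. (f \<omega>)\<^sup>2) = (\<Sum>s<T. expectation (\<lambda>\<omega>. (Y s \<omega>)\<^sup>2)) / (real T)\<^sup>2"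
    proof -
      have "expectation (\<lambda>\<omega>. (f \<omega>)\<^sup>2) = (\<Sum>s<T. \<Sum>t<T. expectation (\<lambda>\<omega>. Y s \<omega> * Y t \<omega>)) / (real T)\<^sup>2"
        unfolding sq using intp by (simp add: Bochner_Integration.integral_sum)
      also have "\<dots> = (\<Sum>s<T. expectation (\<lambda>\<omega>. (Y s \<omega>)\<^sup>2)) / (real T)\<^sup>2"
        unfolding Ep by (simp add: sum.delta)
      finally show ?thesis .
    qed
    have Ef2b: "expectation (\<lambda>\<omega>. (f \<omega>)\<^sup>2) \<le> C / real T"
    proof -
      have "(\<Sum>s<T. expectation (\<lambda>\<omega>. (Y s \<omega>)\<^sup>2)) \<le> (\<Sum>s<T. C)" by (intro sum_mono bnd)
      then have "(\<Sum>s<T. expectation (\<lambda>\<omega>. (Y s \<omega>)\<^sup>2)) \<le> real T * C" by simp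
      then have "(\<Sum>s<T. expectation (\<lambda>\<omega>. (Y s \<omega>)\<^sup>2)) / (real T)\<^sup>2 \<le> real T * C / (real T)\<^sup>2"
        by (intro divide_right_mono) auto
      also have "real T * C / (real T)\<^sup>2 = C / real T" using T by (simp add: power2_eq_square)
      finally show ?thesis unfolding Ef2 .
    qed
    have "prob {\<omega> \<in> space M. \<bar>f \<omega> - expectation f\<bar> \<ge> \<delta>} \<le> variance f / \<delta>\<^sup>2"
      by (rule Chebyshev_inequality[OF rvf intf2 d])
    then have "prob {\<omega> \<in> space M. \<delta> \<le> \<bar>f \<omega>\<bar>} \<le> expectation (\<lambda>\<omega>. (f \<omega>)\<^sup>2) / \<delta>\<^sup>2"
      unfolding Ef by simp
    also have "\<dots> \<le> (C / real T) / \<delta>\<^sup>2" using Ef2b d by (intro divide_right_mono) auto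
    also have "\<dots> = C / (real T * \<delta>\<^sup>2)" by simp
    finally show ?thesis unfolding f_def .
  qed
  have lim: "(\<lambda>T. C / (real T * \<delta>\<^sup>2)) \<longlonglongrightarrow> 0"
  proof -
    have "(\<lambda>T. (C / \<delta>\<^sup>2) / real T) \<longlonglongrightarrow> 0"
      by (intro tendsto_divide_0[OF tendsto_const] filterlim_at_top_imp_at_infinity filterlim_real_sequentially)
    moreover have "(\<lambda>T. (C / \<delta>\<^sup>2) / real T) = (\<lambda>T. C / (real T * \<delta>\<^sup>2))"
      by (simp add: divide_divide_eq_left mult.commute)
    ultimately show ?thesis by simp
  qed
  show ?thesis
  proof (rule tendsto_sandwich[OF _ _ tendsto_const lim])
    show "\<forall>\<^sub>F T in sequentially. 0 \<le> prob {\<omega> \<in> space M. \<delta> \<le> \<bar>(\<Sum>t<T. Y t \<omega>) / real T\<bar>}" by simp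
    show "\<forall>\<^sub>F T in sequentially. prob {\<omega> \<in> space M. \<delta> \<le> \<bar>(\<Sum>t<T. Y t \<omega>) / real T\<bar>} \<le> C / (real T * \<delta>\<^sup>2)"
      using eventually_ge_at_top[of 1] by eventually_elim (rule bound)
  qed
qed

lemma (in prob_space) normal_facts:
  assumes s: "\<sigma> > 0" and D: "distributed M lborel G (normal_density 0 \<sigma>)"
  shows "random_variable borel G"
    and "integrable M (\<lambda>\<omega>. G \<omega> ^ k)"
    and "expectation (\<lambda>\<omega>. G \<omega> ^ k) = (\<integral>x. normal_density 0 \<sigma> x * x ^ k \<partial>lborel)"
    and "expectation G = 0"
    and "expectation (\<lambda>\<omega>. (G \<omega>)\<^sup>2) = \<sigma>\<^sup>2"
proof -
  show rv: "random_variable borel G" using distributed_measurable[OF D] by simp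
  have ib: "integrable lborel (\<lambda>x. normal_density 0 \<sigma> x * x ^ k)"
    using integrable_normal_moment[of \<sigma> 0 k] s by simp
  show "integrable M (\<lambda>\<omega>. G \<omega> ^ k)"
    using distributed_integrable[OF D, of "\<lambda>x. x ^ k"] ib by simp
  show ek: "expectation (\<lambda>\<omega>. G \<omega> ^ k) = (\<integral>x. normal_density 0 \<sigma> x * x ^ k \<partial>lborel)" for k
    using distributed_integral[OF D, of "\<lambda>x. x ^ k"] by simp
  show "expectation G = 0" using normal_distributed_expectation[OF s D] .
  have "(\<integral>x. normal_density 0 \<sigma> x * x ^ 2 \<partial>lborel) = \<sigma>\<^sup>2"
    using integral_normal_moment_even[of \<sigma> 0 1] s by simp
  then show "expectation (\<lambda>\<omega>. (G \<omega>)\<^sup>2) = \<sigma>\<^sup>2" using ek[of 2] by simp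
qed

locale model = prob_space M for M :: "'a measure" +
  fixes \<theta> :: "nat \<Rightarrow> 'a \<Rightarrow> real" and x y :: "nat \<Rightarrow> nat \<Rightarrow> 'a \<Rightarrow> real"
    and N K :: nat and \<phi>r \<sigma>r2 :: real
  assumes N1: "N \<ge> 1" and K1: "K \<ge> 1" and spos: "\<sigma>r2 > 0"
    and indep: "indep_vars (\<lambda>_. borel) (obs_family \<theta> x y) (obs_indices N K)"
    and dist_task: "\<And>t. distributed M lborel (\<theta> t) (normal_density \<phi>r (sqrt \<sigma>r2))"
    and dist_tr: "\<And>t n. n < N \<Longrightarrow> distributed M lborel (\<lambda>\<omega>. x t n \<omega> - \<theta> t \<omega>) std_normal_density"
    and dist_val: "\<And>t k. k < K \<Longrightarrow> distributed M lborel (\<lambda>\<omega>. y t k \<omega> - \<theta> t \<omega>) std_normal_density"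
begin

abbreviation "Z \<equiv> obs_family \<theta> x y"

definition m_of :: "obs_idx \<Rightarrow> real" where
  "m_of i = (case i of Task _ \<Rightarrow> \<phi>r | _ \<Rightarrow> 0)"
definition s_of :: "obs_idx \<Rightarrow> real" where
  "s_of i = (case i of Task _ \<Rightarrow> sqrt \<sigma>r2 | _ \<Rightarrow> 1)"

lemma obs_dist: "i \<in> obs_indices N K \<Longrightarrow> distributed M lborel (Z i) (normal_density (m_of i) (s_of i))"
  by (auto simp: obs_indices_def obs_family_def m_of_def s_of_def dist_task dist_tr dist_val)

lemma s_of_pos: "s_of i > 0"
  using spos by (simp add: s_of_def split: obs_idx.split)

lemma lin_normal:
  assumes J: "finite J" "J \<noteq> {}" "J \<subseteq> obs_indices N K" and c: "\<And>i. i \<in> J \<Longrightarrow> c i \<noteq> 0"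
  shows "distributed M lborel (\<lambda>\<omega>. \<Sum>i\<in>J. c i * Z i \<omega>)
     (normal_density (\<Sum>i\<in>J. c i * m_of i) (sqrt (\<Sum>i\<in>J. (\<bar>c i\<bar> * s_of i)\<^sup>2)))"
proof -
  have ind: "indep_vars (\<lambda>_. borel) (\<lambda>i \<omega>. c i * Z i \<omega>) J"
    using indep_vars_compose2[OF indep_vars_subset[OF indep J(3)], of "\<lambda>i z. c i * z" "\<lambda>_. borel"]
    by simp
  have d: "distributed M lborel (\<lambda>\<omega>. c i * Z i \<omega>) (normal_density (c i * m_of i) (\<bar>c i\<bar> * s_of i))"
    if "i \<in> J" for i
    using normal_density_affine[OF obs_dist[of i] s_of_pos c[OF that], of 0] that J(3) by auto
  show ?thesis
    by (rule sum_indep_normal[OF J(1) J(2) ind]) (use d c s_of_pos in auto)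
qed

definition V :: "nat \<Rightarrow> 'a \<Rightarrow> real" where
  "V t \<omega> = \<theta> t \<omega> - \<phi>r + (\<Sum>n<N. x t n \<omega> - \<theta> t \<omega>) / real N"
definition W :: "nat \<Rightarrow> 'a \<Rightarrow> real" where
  "W t \<omega> = \<theta> t \<omega> - \<phi>r + (\<Sum>k<K. y t k \<omega> - \<theta> t \<omega>) / real K"
definition cf :: "real \<Rightarrow> obs_idx \<Rightarrow> real" where
  "cf a i = (case i of Task _ \<Rightarrow> a | Tr _ _ \<Rightarrow> 1 / real N | Val _ _ \<Rightarrow> 1 / real K)"

definition JV where "JV t = insert (Task t) (Tr t ` {..<N})"
definition JW where "JW t = insert (Task t) (Val t ` {..<K})"
definition JVW where "JVW t = insert (Task t) (Tr t ` {..<N} \<union> Val t ` {..<K})"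

lemma J_sub: "JV t \<subseteq> obs_indices N K" "JW t \<subseteq> obs_indices N K" "JVW t \<subseteq> obs_indices N K"
  by (auto simp: JV_def JW_def JVW_def obs_indices_def)

lemma J_fin: "finite (JV t)" "finite (JW t)" "finite (JVW t)"
  by (auto simp: JV_def JW_def JVW_def)

lemma cf_nz: "a \<noteq> 0 \<Longrightarrow> cf a i \<noteq> 0"
  using N1 K1 by (simp add: cf_def split: obs_idx.split)

lemma inj_Tr: "inj_on (Tr t) A" and inj_Val: "inj_on (Val t) A"
  by (auto simp: inj_on_def)

lemma sumTr: "(\<Sum>i\<in>Tr t ` {..<N}. f i) = (\<Sum>n<N. f (Tr t n))"
  by (simp add: sum.reindex inj_Tr)
lemma sumVal: "(\<Sum>i\<in>Val t ` {..<K}. f i) = (\<Sum>k<K. f (Val t k))"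
  by (simp add: sum.reindex inj_Val)

lemma sum_JV: "(\<Sum>i\<in>JV t. f i) = f (Task t) + (\<Sum>n<N. f (Tr t n))"
  unfolding JV_def by (subst sum.insert) (auto simp: sumTr)
lemma sum_JW: "(\<Sum>i\<in>JW t. f i) = f (Task t) + (\<Sum>k<K. f (Val t k))"
  unfolding JW_def by (subst sum.insert) (auto simp: sumVal)
lemma sum_JVW: "(\<Sum>i\<in>JVW t. f i) = f (Task t) + (\<Sum>n<N. f (Tr t n)) + (\<Sum>k<K. f (Val t k))"
proof -
  have u: "sum f (Tr t ` {..<N} \<union> Val t ` {..<K}) = sum f (Tr t ` {..<N}) + sum f (Val t ` {..<K})"
    by (rule sum.union_disjoint) auto
  show ?thesis unfolding JVW_def by (subst sum.insert) (auto simp: u sumTr sumVal add.assoc)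
qed

lemma affine_shift:
  assumes "distributed M lborel F (normal_density \<mu> s)" "s > 0" "\<And>\<omega>. G \<omega> = F \<omega> - \<mu>"
  shows "distributed M lborel G (normal_density 0 s)"
proof -
  have "distributed M lborel (\<lambda>\<omega>. - \<mu> + 1 * F \<omega>) (normal_density (- \<mu> + 1 * \<mu>) (\<bar>1\<bar> * s))"
    by (rule normal_density_affine[OF assms(1) assms(2)]) simp
  moreover have "(\<lambda>\<omega>. - \<mu> + 1 * F \<omega>) = G" using assms(3) by auto
  ultimately show ?thesis by simp
qed

lemma invN: "1 / real N > 0" using N1 by simp
lemma invK: "1 / real K > 0" using K1 by simp

lemma sq_sum_N: "(\<Sum>n<N. (1 / real N)\<^sup>2) = 1 / real N"
  using N1 by (simp add: power2_eq_square)
lemma sq_sum_K: "(\<Sum>k<K. (1 / real K)\<^sup>2) = 1 / real K"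
  using K1 by (simp add: power2_eq_square)

lemma dist_V: "distributed M lborel (V t) (normal_density 0 (sqrt (\<sigma>r2 + 1 / real N)))"
proof -
  have D: "distributed M lborel (\<lambda>\<omega>. \<Sum>i\<in>JV t. cf 1 i * Z i \<omega>)
     (normal_density (\<Sum>i\<in>JV t. cf 1 i * m_of i) (sqrt (\<Sum>i\<in>JV t. (\<bar>cf 1 i\<bar> * s_of i)\<^sup>2)))"
    by (rule lin_normal[OF J_fin(1) _ J_sub(1)]) (auto simp: JV_def cf_nz)
  have m: "(\<Sum>i\<in>JV t. cf 1 i * m_of i) = \<phi>r" by (simp add: sum_JV cf_def m_of_def)
  have v: "(\<Sum>i\<in>JV t. (\<bar>cf 1 i\<bar> * s_of i)\<^sup>2) = \<sigma>r2 + 1 / real N"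
    using spos sq_sum_N by (simp add: sum_JV cf_def s_of_def)
  have e: "V t \<omega> = (\<Sum>i\<in>JV t. cf 1 i * Z i \<omega>) - \<phi>r" for \<omega>
    by (simp add: sum_JV cf_def obs_family_def V_def sum_divide_distrib)
  show ?thesis
    by (rule affine_shift[OF D[unfolded m v]]) (use spos invN invK in \<open>auto simp: e intro!: add_pos_pos\<close>)
qed

lemma dist_W: "distributed M lborel (W t) (normal_density 0 (sqrt (\<sigma>r2 + 1 / real K)))"
proof -
  have D: "distributed M lborel (\<lambda>\<omega>. \<Sum>i\<in>JW t. cf 1 i * Z i \<omega>)
     (normal_density (\<Sum>i\<in>JW t. cf 1 i * m_of i) (sqrt (\<Sum>i\<in>JW t. (\<bar>cf 1 i\<bar> * s_of i)\<^sup>2)))"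
    by (rule lin_normal[OF J_fin(2) _ J_sub(2)]) (auto simp: JW_def cf_nz)
  have m: "(\<Sum>i\<in>JW t. cf 1 i * m_of i) = \<phi>r" by (simp add: sum_JW cf_def m_of_def)
  have v: "(\<Sum>i\<in>JW t. (\<bar>cf 1 i\<bar> * s_of i)\<^sup>2) = \<sigma>r2 + 1 / real K"
    using spos sq_sum_K by (simp add: sum_JW cf_def s_of_def)
  have e: "W t \<omega> = (\<Sum>i\<in>JW t. cf 1 i * Z i \<omega>) - \<phi>r" for \<omega>
    by (simp add: sum_JW cf_def obs_family_def W_def sum_divide_distrib)
  show ?thesis
    by (rule affine_shift[OF D[unfolded m v]]) (use spos invN invK in \<open>auto simp: e intro!: add_pos_pos\<close>)
qed

lemma dist_VW: "distributed M lborel (\<lambda>\<omega>. V t \<omega> + W t \<omega>)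
   (normal_density 0 (sqrt (4 * \<sigma>r2 + 1 / real N + 1 / real K)))"
proof -
  have D: "distributed M lborel (\<lambda>\<omega>. \<Sum>i\<in>JVW t. cf 2 i * Z i \<omega>)
     (normal_density (\<Sum>i\<in>JVW t. cf 2 i * m_of i) (sqrt (\<Sum>i\<in>JVW t. (\<bar>cf 2 i\<bar> * s_of i)\<^sup>2)))"
    by (rule lin_normal[OF J_fin(3) _ J_sub(3)]) (auto simp: JVW_def cf_nz)
  have m: "(\<Sum>i\<in>JVW t. cf 2 i * m_of i) = 2 * \<phi>r" by (simp add: sum_JVW cf_def m_of_def)
  have v: "(\<Sum>i\<in>JVW t. (\<bar>cf 2 i\<bar> * s_of i)\<^sup>2) = 4 * \<sigma>r2 + 1 / real N + 1 / real K"
    using spos sq_sum_N sq_sum_K by (simp add: sum_JVW cf_def s_of_def power_mult_distrib)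
  have e: "V t \<omega> + W t \<omega> = (\<Sum>i\<in>JVW t. cf 2 i * Z i \<omega>) - 2 * \<phi>r" for \<omega>
    by (simp add: sum_JVW cf_def obs_family_def V_def W_def sum_divide_distrib)
  show ?thesis
    by (rule affine_shift[OF D[unfolded m v]]) (use spos invN invK in \<open>auto simp: e intro!: add_pos_pos\<close>)
qed

definition Vf :: "nat \<Rightarrow> (obs_idx \<Rightarrow> real) \<Rightarrow> real" where
  "Vf t f = f (Task t) - \<phi>r + (\<Sum>n<N. f (Tr t n)) / real N"
definition Wf :: "nat \<Rightarrow> (obs_idx \<Rightarrow> real) \<Rightarrow> real" where
  "Wf t f = f (Task t) - \<phi>r + (\<Sum>k<K. f (Val t k)) / real K"

lemma V_restrict: "V t \<omega> = Vf t (restrict (\<lambda>i. Z i \<omega>) (JVW t))"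
  unfolding V_def Vf_def by (simp add: JVW_def obs_family_def)
lemma W_restrict: "W t \<omega> = Wf t (restrict (\<lambda>i. Z i \<omega>) (JVW t))"
  unfolding W_def Wf_def by (simp add: JVW_def obs_family_def)

lemma Vf_meas: "Vf t \<in> borel_measurable (PiM (JVW t) (\<lambda>_. borel))"
proof -
  have [measurable]: "(\<lambda>f. f (Task t)) \<in> borel_measurable (PiM (JVW t) (\<lambda>_. borel))"
    by (rule measurable_component_singleton) (simp add: JVW_def)
  have [measurable]: "(\<lambda>f. f (Tr t n)) \<in> borel_measurable (PiM (JVW t) (\<lambda>_. borel))" if "n \<in> {..<N}" for n
    by (rule measurable_component_singleton) (use that in \<open>simp add: JVW_def\<close>)
  show ?thesis unfolding Vf_def by measurable
qed

lemma Wf_meas: "Wf t \<in> borel_measurable (PiM (JVW t) (\<lambda>_. borel))"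
proof -
  have [measurable]: "(\<lambda>f. f (Task t)) \<in> borel_measurable (PiM (JVW t) (\<lambda>_. borel))"
    by (rule measurable_component_singleton) (simp add: JVW_def)
  have [measurable]: "(\<lambda>f. f (Val t k)) \<in> borel_measurable (PiM (JVW t) (\<lambda>_. borel))" if "k \<in> {..<K}" for k
    by (rule measurable_component_singleton) (use that in \<open>simp add: JVW_def\<close>)
  show ?thesis unfolding Wf_def by measurable
qed

lemma task_indep:
  assumes st: "s \<noteq> t" and g[measurable]: "g \<in> borel_measurable (borel \<Otimes>\<^sub>M borel)"
  shows "indep_var borel (\<lambda>\<omega>. g (V s \<omega>, W s \<omega>)) borel (\<lambda>\<omega>. g (V t \<omega>, W t \<omega>))"
proof -
  have dj: "JVW s \<inter> JVW t = {}" using st by (auto simp: JVW_def)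
  have iv: "indep_var (PiM (JVW s) (\<lambda>_. borel)) (\<lambda>\<omega>. restrict (\<lambda>i. Z i \<omega>) (JVW s))
                      (PiM (JVW t) (\<lambda>_. borel)) (\<lambda>\<omega>. restrict (\<lambda>i. Z i \<omega>) (JVW t))"
    by (rule indep_var_restrict[OF indep dj J_sub(3) J_sub(3)])
  have m: "(\<lambda>f. g (Vf u f, Wf u f)) \<in> borel_measurable (PiM (JVW u) (\<lambda>_. borel))" for u
    using Vf_meas[of u] Wf_meas[of u] by measurable
  have "indep_var borel ((\<lambda>f. g (Vf s f, Wf s f)) \<circ> (\<lambda>\<omega>. restrict (\<lambda>i. Z i \<omega>) (JVW s)))
                  borel ((\<lambda>f. g (Vf t f, Wf t f)) \<circ> (\<lambda>\<omega>. restrict (\<lambda>i. Z i \<omega>) (JVW t)))"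
    by (rule indep_var_compose[OF iv m m])
  then show ?thesis by (simp add: comp_def V_restrict W_restrict)
qed

end

lemma ineq1: "\<bar>(a::real) * b\<bar> \<le> a\<^sup>2 + b\<^sup>2"
proof -
  have "2 * \<bar>a\<bar> * \<bar>b\<bar> \<le> \<bar>a\<bar>\<^sup>2 + \<bar>b\<bar>\<^sup>2" by (rule sum_squares_bound)
  moreover have "0 \<le> \<bar>a\<bar> * \<bar>b\<bar>" by simp
  moreover have "\<bar>a\<bar>\<^sup>2 = a\<^sup>2" "\<bar>b\<bar>\<^sup>2 = b\<^sup>2" by simp_all
  moreover have "\<bar>a * b\<bar> = \<bar>a\<bar> * \<bar>b\<bar>" by (rule abs_mult)
  ultimately show ?thesis by linarith
qed

lemma ineq2: "(a::real)\<^sup>2 * b\<^sup>2 \<le> a ^ 4 + b ^ 4"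
proof -
  have "2 * a\<^sup>2 * b\<^sup>2 \<le> (a\<^sup>2)\<^sup>2 + (b\<^sup>2)\<^sup>2" by (rule sum_squares_bound)
  moreover have "0 \<le> a\<^sup>2 * b\<^sup>2" by simp
  moreover have "(a\<^sup>2)\<^sup>2 = a ^ 4" "(b\<^sup>2)\<^sup>2 = b ^ 4" by (simp_all flip: power_mult)
  ultimately show ?thesis by linarith
qed

context model
begin

definition "sV = sqrt (\<sigma>r2 + 1 / real N)"
definition "sW = sqrt (\<sigma>r2 + 1 / real K)"
definition "sS = sqrt (4 * \<sigma>r2 + 1 / real N + 1 / real K)"

lemma sV_pos: "sV > 0" and sW_pos: "sW > 0" and sS_pos: "sS > 0"
  using spos invN invK by (auto simp: sV_def sW_def sS_def intro!: add_pos_pos)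

lemma sV2: "sV\<^sup>2 = \<sigma>r2 + 1 / real N" and sW2: "sW\<^sup>2 = \<sigma>r2 + 1 / real K"
  and sS2: "sS\<^sup>2 = 4 * \<sigma>r2 + 1 / real N + 1 / real K"
  using spos invN invK by (auto simp: sV_def sW_def sS_def)

lemmas nV = normal_facts[OF sV_pos dist_V[folded sV_def]]
lemmas nW = normal_facts[OF sW_pos dist_W[folded sW_def]]
lemmas nS = normal_facts[OF sS_pos dist_VW[folded sS_def]]

lemma rvV[measurable]: "V t \<in> borel_measurable M" using nV(1) by simp
lemma rvW[measurable]: "W t \<in> borel_measurable M" using nW(1) by simp

lemma wlln_task:
  assumes g[measurable]: "g \<in> borel_measurable (borel \<Otimes>\<^sub>M borel)"
    and i2: "\<And>t. integrable M (\<lambda>\<omega>. (g (V t \<omega>, W t \<omega>))\<^sup>2)"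
    and e0: "\<And>t. expectation (\<lambda>\<omega>. g (V t \<omega>, W t \<omega>)) = 0"
    and eb: "\<And>t. expectation (\<lambda>\<omega>. (g (V t \<omega>, W t \<omega>))\<^sup>2) \<le> C"
    and d: "\<delta> > 0"
  shows "(\<lambda>T. prob {\<omega> \<in> space M. \<delta> \<le> \<bar>(\<Sum>t<T. g (V t \<omega>, W t \<omega>)) / real T\<bar>}) \<longlonglongrightarrow> 0"
  by (rule wlln_zero[OF _ i2 e0 eb task_indep[OF _ g] d]) measurable

definition "m4V = (\<integral>x. normal_density 0 sV x * x ^ 4 \<partial>lborel)"
definition "m4W = (\<integral>x. normal_density 0 sW x * x ^ 4 \<partial>lborel)"

lemma lim1: "\<delta> > 0 \<Longrightarrow> (\<lambda>T. prob {\<omega> \<in> space M. \<delta> \<le> \<bar>(\<Sum>t<T. V t \<omega>) / real T\<bar>}) \<longlonglongrightarrow> 0"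
  using wlln_task[of "\<lambda>p. fst p" "sV\<^sup>2" \<delta>] nV(2)[of _ 2] nV(4) nV(5) by simp

lemma lim2: "\<delta> > 0 \<Longrightarrow> (\<lambda>T. prob {\<omega> \<in> space M. \<delta> \<le> \<bar>(\<Sum>t<T. W t \<omega>) / real T\<bar>}) \<longlonglongrightarrow> 0"
  using wlln_task[of "\<lambda>p. snd p" "sW\<^sup>2" \<delta>] nW(2)[of _ 2] nW(4) nW(5) by simp

lemma lim3: "\<delta> > 0 \<Longrightarrow> (\<lambda>T. prob {\<omega> \<in> space M. \<delta> \<le> \<bar>(\<Sum>t<T. (V t \<omega>)\<^sup>2 - sV\<^sup>2) / real T\<bar>}) \<longlonglongrightarrow> 0"
proof -
  assume d: "\<delta> > 0"
  let ?c = "sV\<^sup>2"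
  have eq: "((V t \<omega>)\<^sup>2 - ?c)\<^sup>2 = V t \<omega> ^ 4 - 2 * ?c * (V t \<omega>)\<^sup>2 + ?c\<^sup>2" for t \<omega>
  proof -
    have "((V t \<omega>)\<^sup>2)\<^sup>2 = V t \<omega> ^ 4" by (simp flip: power_mult)
    then show ?thesis by (simp add: power2_diff)
  qed
  have i2: "integrable M (\<lambda>\<omega>. ((V t \<omega>)\<^sup>2 - ?c)\<^sup>2)" for t
    unfolding eq by (intro Bochner_Integration.integrable_add Bochner_Integration.integrable_diff
        integrable_mult_right nV(2) integrable_const)
  have e0: "expectation (\<lambda>\<omega>. (V t \<omega>)\<^sup>2 - ?c) = 0" for t
    using nV(2)[of t 2] nV(5)[of t] by (simp add: Bochner_Integration.integral_diff prob_space)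
  have e2: "expectation (\<lambda>\<omega>. ((V t \<omega>)\<^sup>2 - ?c)\<^sup>2) = m4V - 2 * ?c * ?c + ?c\<^sup>2" for t
    unfolding eq using nV(2)[of t 2] nV(2)[of t 4] nV(3)[of t 4] nV(5)[of t]
    by (simp add: Bochner_Integration.integral_diff Bochner_Integration.integral_add m4V_def prob_space)
  show ?thesis
    using wlln_task[of "\<lambda>p. (fst p)\<^sup>2 - ?c" "m4V - 2 * ?c * ?c + ?c\<^sup>2" \<delta>] i2 e0 e2 d by simp
qed

lemma intVW: "integrable M (\<lambda>\<omega>. V t \<omega> * W t \<omega>)"
proof (rule Bochner_Integration.integrable_bound)
  show "integrable M (\<lambda>\<omega>. (V t \<omega>)\<^sup>2 + (W t \<omega>)\<^sup>2)"
    by (intro Bochner_Integration.integrable_add nV(2) nW(2))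
  show "(\<lambda>\<omega>. V t \<omega> * W t \<omega>) \<in> borel_measurable M" by measurable
  show "AE \<omega> in M. norm (V t \<omega> * W t \<omega>) \<le> norm ((V t \<omega>)\<^sup>2 + (W t \<omega>)\<^sup>2)"
    using ineq1 by simp
qed

lemma intVW2: "integrable M (\<lambda>\<omega>. (V t \<omega>)\<^sup>2 * (W t \<omega>)\<^sup>2)"
proof (rule Bochner_Integration.integrable_bound)
  show "integrable M (\<lambda>\<omega>. V t \<omega> ^ 4 + W t \<omega> ^ 4)"
    by (intro Bochner_Integration.integrable_add nV(2) nW(2))
  show "(\<lambda>\<omega>. (V t \<omega>)\<^sup>2 * (W t \<omega>)\<^sup>2) \<in> borel_measurable M" by measurable
  have "V t \<omega> ^ 4 + W t \<omega> ^ 4 \<ge> 0" for \<omega>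
    by (intro add_nonneg_nonneg) (simp_all add: zero_le_even_power)
  then show "AE \<omega> in M. norm ((V t \<omega>)\<^sup>2 * (W t \<omega>)\<^sup>2) \<le> norm (V t \<omega> ^ 4 + W t \<omega> ^ 4)"
    using ineq2 by simp
qed

lemma EVW: "expectation (\<lambda>\<omega>. V t \<omega> * W t \<omega>) = \<sigma>r2"
proof -
  have eq: "(V t \<omega> + W t \<omega>)\<^sup>2 = (V t \<omega>)\<^sup>2 + 2 * (V t \<omega> * W t \<omega>) + (W t \<omega>)\<^sup>2" for \<omega>
    by (simp add: power2_sum)
  have "sS\<^sup>2 = expectation (\<lambda>\<omega>. (V t \<omega> + W t \<omega>)\<^sup>2)" using nS(5)[of t] by simp
  also have "\<dots> = sV\<^sup>2 + 2 * expectation (\<lambda>\<omega>. V t \<omega> * W t \<omega>) + sW\<^sup>2"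
    unfolding eq using nV(2)[of t 2] nW(2)[of t 2] intVW[of t] nV(5)[of t] nW(5)[of t]
    by (simp add: Bochner_Integration.integral_add)
  finally show ?thesis unfolding sS2 sV2 sW2 by simp
qed

lemma lim4: "\<delta> > 0 \<Longrightarrow> (\<lambda>T. prob {\<omega> \<in> space M. \<delta> \<le> \<bar>(\<Sum>t<T. V t \<omega> * W t \<omega> - \<sigma>r2) / real T\<bar>}) \<longlonglongrightarrow> 0"
proof -
  assume d: "\<delta> > 0"
  have eq: "(V t \<omega> * W t \<omega> - \<sigma>r2)\<^sup>2 = (V t \<omega>)\<^sup>2 * (W t \<omega>)\<^sup>2 - 2 * \<sigma>r2 * (V t \<omega> * W t \<omega>) + \<sigma>r2\<^sup>2" for t \<omega>
    by (simp add: power2_diff power_mult_distrib)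
  have i2: "integrable M (\<lambda>\<omega>. (V t \<omega> * W t \<omega> - \<sigma>r2)\<^sup>2)" for t
    unfolding eq by (intro Bochner_Integration.integrable_add Bochner_Integration.integrable_diff
        integrable_mult_right intVW intVW2 integrable_const)
  have e0: "expectation (\<lambda>\<omega>. V t \<omega> * W t \<omega> - \<sigma>r2) = 0" for t
    using intVW[of t] EVW[of t] by (simp add: Bochner_Integration.integral_diff prob_space)
  have e2: "expectation (\<lambda>\<omega>. (V t \<omega> * W t \<omega> - \<sigma>r2)\<^sup>2) \<le> m4V + m4W" for t
  proof -
    have "expectation (\<lambda>\<omega>. (V t \<omega> * W t \<omega> - \<sigma>r2)\<^sup>2) = expectation (\<lambda>\<omega>. (V t \<omega>)\<^sup>2 * (W t \<omega>)\<^sup>2) - \<sigma>r2\<^sup>2"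
      unfolding eq using intVW[of t] intVW2[of t] EVW[of t]
      by (simp add: Bochner_Integration.integral_diff Bochner_Integration.integral_add power2_eq_square prob_space)
    also have "\<dots> \<le> expectation (\<lambda>\<omega>. (V t \<omega>)\<^sup>2 * (W t \<omega>)\<^sup>2)" by simp
    also have "\<dots> \<le> expectation (\<lambda>\<omega>. V t \<omega> ^ 4 + W t \<omega> ^ 4)"
      by (intro integral_mono intVW2 Bochner_Integration.integrable_add nV(2) nW(2) ineq2)
    also have "\<dots> = m4V + m4W"
      using nV(2)[of t 4] nW(2)[of t 4] nV(3)[of t 4] nW(3)[of t 4]
      by (simp add: Bochner_Integration.integral_add m4V_def m4W_def)
    finally show ?thesis .
  qed
  show ?thesis
    using wlln_task[of "\<lambda>p. fst p * snd p - \<sigma>r2" "m4V + m4W" \<delta>] i2 e0 e2 d by simp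
qed

end

context model
begin

definition "mV T \<omega> = (\<Sum>t<T. V t \<omega>) / real T"
definition "mW T \<omega> = (\<Sum>t<T. W t \<omega>) / real T"
definition "mVV T \<omega> = (\<Sum>t<T. (V t \<omega>)\<^sup>2) / real T"
definition "mVW T \<omega> = (\<Sum>t<T. V t \<omega> * W t \<omega>) / real T"

definition Dcond :: "real \<Rightarrow> real \<Rightarrow> real \<Rightarrow> real \<Rightarrow> real \<Rightarrow> bool" where
  "Dcond \<epsilon> a b c d \<longleftrightarrow> (c - a\<^sup>2 - (d - a * b)) \<noteq> 0 \<and>
     0 < (d - a * b) / (real N * (c - a\<^sup>2 - (d - a * b))) \<and> \<bar>a\<bar> < \<epsilon> \<and>
     \<bar>(d - a * b) / (real N * (c - a\<^sup>2 - (d - a * b))) - \<sigma>r2\<bar> < \<epsilon>"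

lemma avg_x: "avg N (\<lambda>n. x t n \<omega>) = \<phi>r + V t \<omega>"
  using N1 by (simp add: avg_def V_def sum_subtractf field_simps)
lemma avg_y: "avg K (\<lambda>k. y t k \<omega>) = \<phi>r + W t \<omega>"
  using K1 by (simp add: avg_def W_def sum_subtractf field_simps)

lemma ph_eq: "T \<ge> 1 \<Longrightarrow> ph (\<lambda>t n. x t n \<omega>) N T = \<phi>r + mV T \<omega>"
  unfolding ph_def avg_x by (simp add: mV_def avg_def sum.distrib add_divide_distrib)

lemma S2_eq: assumes T: "T \<ge> 1"
  shows "S2 (\<lambda>t n. x t n \<omega>) N T = real T * (mVV T \<omega> - (mV T \<omega>)\<^sup>2)"
proof -
  let ?m = "mV T \<omega>"
  have "S2 (\<lambda>t n. x t n \<omega>) N T = (\<Sum>t<T. (V t \<omega> - ?m)\<^sup>2)"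
    unfolding S2_def ph_eq[OF T] avg_x by simp
  also have "\<dots> = (\<Sum>t<T. (V t \<omega>)\<^sup>2) - 2 * ?m * (\<Sum>t<T. V t \<omega>) + real T * ?m\<^sup>2"
    by (rule sum_sq_expand)
  also have "(\<Sum>t<T. (V t \<omega>)\<^sup>2) = real T * mVV T \<omega>" using T by (simp add: mVV_def)
  also have "(\<Sum>t<T. V t \<omega>) = real T * ?m" using T by (simp add: mV_def)
  finally show ?thesis by (simp add: algebra_simps power2_eq_square)
qed

lemma S11_eq: assumes T: "T \<ge> 1"
  shows "S11 (\<lambda>t n. x t n \<omega>) (\<lambda>t k. y t k \<omega>) N K T = real T * (mVW T \<omega> - mV T \<omega> * mW T \<omega>)"
proof -
  let ?m = "mV T \<omega>"
  have "S11 (\<lambda>t n. x t n \<omega>) (\<lambda>t k. y t k \<omega>) N K T = (\<Sum>t<T. (V t \<omega> - ?m) * (W t \<omega> - ?m))"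
    unfolding S11_def ph_eq[OF T] avg_x avg_y by simp
  also have "\<dots> = (\<Sum>t<T. V t \<omega> * W t \<omega>) - ?m * (\<Sum>t<T. W t \<omega>) - ?m * (\<Sum>t<T. V t \<omega>) + real T * ?m\<^sup>2"
    by (simp add: algebra_simps sum.distrib sum_subtractf sum_distrib_left power2_eq_square)
  also have "(\<Sum>t<T. V t \<omega> * W t \<omega>) = real T * mVW T \<omega>" using T by (simp add: mVW_def)
  also have "(\<Sum>t<T. V t \<omega>) = real T * ?m" using T by (simp add: mV_def)
  also have "(\<Sum>t<T. W t \<omega>) = real T * mW T \<omega>" using T by (simp add: mW_def)
  finally show ?thesis by (simp add: algebra_simps power2_eq_square)
qed

lemma good_iff:
  assumes T: "T \<ge> 1"
  shows "estimate_good N K (\<lambda>t n. x t n \<omega>) (\<lambda>t k. y t k \<omega>) T \<phi>r \<sigma>r2 \<epsilon> \<longleftrightarrow>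
    Dcond \<epsilon> (mV T \<omega>) (mW T \<omega>) (mVV T \<omega>) (mVW T \<omega>)"
proof -
  let ?P = "mVV T \<omega> - (mV T \<omega>)\<^sup>2" and ?A = "mVW T \<omega> - mV T \<omega> * mW T \<omega>"
  have Tp: "real T > 0" using T by simp
  have d1: "real T * ?P - real T * ?A = real T * (?P - ?A)" by (simp add: algebra_simps)
  have ne: "(real T * ?P \<noteq> real T * ?A) \<longleftrightarrow> ?P - ?A \<noteq> 0" using Tp by simp
  have q: "real T * ?A / (real N * (real T * (?P - ?A))) = ?A / (real N * (?P - ?A))"
    using Tp by simp
  show ?thesis
    unfolding estimate_good_iff[OF N1 K1 T] S2_eq[OF T] S11_eq[OF T] ph_eq[OF T] d1 q Dcond_def
    using ne by simp
qed

lemma meas_V_stats[measurable]: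
  "mV T \<in> borel_measurable M" "mW T \<in> borel_measurable M" "mVV T \<in> borel_measurable M" "mVW T \<in> borel_measurable M"
  unfolding mV_def[abs_def] mW_def[abs_def] mVV_def[abs_def] mVW_def[abs_def] by measurable

lemma good_sets: "{\<omega> \<in> space M. Dcond \<epsilon> (mV T \<omega>) (mW T \<omega>) (mVV T \<omega>) (mVW T \<omega>)} \<in> sets M"
  unfolding Dcond_def by measurable

lemma main:
  assumes e: "\<epsilon> > 0"
  shows "(\<lambda>T. prob {\<omega> \<in> space M. estimate_good N K (\<lambda>t n. x t n \<omega>) (\<lambda>t k. y t k \<omega>) T \<phi>r \<sigma>r2 \<epsilon>}) \<longlonglongrightarrow> 1"
proof -
  have n: "real N \<ge> 1" using N1 by simp
  obtain \<delta> where d: "\<delta> > 0" and cl: "\<And>a b c d. \<bar>a\<bar> < \<delta> \<and> \<bar>b\<bar> < \<delta> \<and> \<bar>c - (\<sigma>r2 + 1 / real N)\<bar> < \<delta> \<and> \<bar>d - \<sigma>r2\<bar> < \<delta> \<Longrightarrow>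
      Dcond \<epsilon> a b c d"
    using close_bound[OF n spos e] unfolding Dcond_def by blast
  define E1 where "E1 T = {\<omega> \<in> space M. \<delta> \<le> \<bar>(\<Sum>t<T. V t \<omega>) / real T\<bar>}" for T
  define E2 where "E2 T = {\<omega> \<in> space M. \<delta> \<le> \<bar>(\<Sum>t<T. W t \<omega>) / real T\<bar>}" for T
  define E3 where "E3 T = {\<omega> \<in> space M. \<delta> \<le> \<bar>(\<Sum>t<T. (V t \<omega>)\<^sup>2 - sV\<^sup>2) / real T\<bar>}" for T
  define E4 where "E4 T = {\<omega> \<in> space M. \<delta> \<le> \<bar>(\<Sum>t<T. V t \<omega> * W t \<omega> - \<sigma>r2) / real T\<bar>}" for T
  have Em[measurable]: "E1 T \<in> sets M" "E2 T \<in> sets M" "E3 T \<in> sets M" "E4 T \<in> sets M" for T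
    unfolding E1_def E2_def E3_def E4_def by measurable
  define G where "G T = {\<omega> \<in> space M. estimate_good N K (\<lambda>t n. x t n \<omega>) (\<lambda>t k. y t k \<omega>) T \<phi>r \<sigma>r2 \<epsilon>}" for T
  have bnd: "1 - (prob (E1 T) + prob (E2 T) + prob (E3 T) + prob (E4 T)) \<le> prob (G T)" if T: "T \<ge> 1" for T
  proof -
    define D where "D = {\<omega> \<in> space M. Dcond \<epsilon> (mV T \<omega>) (mW T \<omega>) (mVV T \<omega>) (mVW T \<omega>)}"
    have GD: "G T = D" unfolding G_def D_def using good_iff[OF T] by auto
    have Dm: "D \<in> sets M" unfolding D_def by (rule good_sets)
    have sub: "space M - D \<subseteq> E1 T \<union> E2 T \<union> E3 T \<union> E4 T"
    proof
      fix \<omega> assume w: "\<omega> \<in> space M - D"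
      show "\<omega> \<in> E1 T \<union> E2 T \<union> E3 T \<union> E4 T"
      proof (rule ccontr)
        assume "\<omega> \<notin> E1 T \<union> E2 T \<union> E3 T \<union> E4 T"
        then have h1: "\<bar>(\<Sum>t<T. V t \<omega>) / real T\<bar> < \<delta>" and h2: "\<bar>(\<Sum>t<T. W t \<omega>) / real T\<bar> < \<delta>"
          and h3: "\<bar>(\<Sum>t<T. (V t \<omega>)\<^sup>2 - sV\<^sup>2) / real T\<bar> < \<delta>"
          and h4: "\<bar>(\<Sum>t<T. V t \<omega> * W t \<omega> - \<sigma>r2) / real T\<bar> < \<delta>"
          using w unfolding E1_def E2_def E3_def E4_def by auto
        have Tp: "real T > 0" using T by simp
        have r3: "(\<Sum>t<T. (V t \<omega>)\<^sup>2 - sV\<^sup>2) / real T = mVV T \<omega> - (\<sigma>r2 + 1 / real N)"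
          unfolding mVV_def sV2[symmetric] using Tp by (simp add: sum_subtractf diff_divide_distrib)
        have r4: "(\<Sum>t<T. V t \<omega> * W t \<omega> - \<sigma>r2) / real T = mVW T \<omega> - \<sigma>r2"
          unfolding mVW_def using Tp by (simp add: sum_subtractf diff_divide_distrib)
        have "Dcond \<epsilon> (mV T \<omega>) (mW T \<omega>) (mVV T \<omega>) (mVW T \<omega>)"
          using h1 h2 h3 h4 unfolding r3 r4 mV_def[symmetric] mW_def[symmetric] by (intro cl) auto
        then show False using w unfolding D_def by auto
      qed
    qed
    have "prob (space M - D) \<le> prob (E1 T \<union> E2 T \<union> E3 T \<union> E4 T)"
      using sub by (intro finite_measure_mono) auto
    also have "\<dots> \<le> prob (E1 T) + prob (E2 T) + prob (E3 T) + prob (E4 T)"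
      by (intro order_trans[OF measure_Un_le] add_mono order_refl) auto
    finally have "prob (space M - D) \<le> prob (E1 T) + prob (E2 T) + prob (E3 T) + prob (E4 T)" .
    then show ?thesis unfolding GD prob_compl[OF Dm] by simp
  qed
  have lo: "(\<lambda>T. 1 - (prob (E1 T) + prob (E2 T) + prob (E3 T) + prob (E4 T))) \<longlonglongrightarrow> 1 - (0 + 0 + 0 + 0)"
    unfolding E1_def E2_def E3_def E4_def
    by (intro tendsto_intros lim1 lim2 lim3 lim4 d)
  show ?thesis unfolding G_def[symmetric]
  proof (rule tendsto_sandwich[OF _ _ lo[simplified] tendsto_const])
    show "\<forall>\<^sub>F T in sequentially. 1 - (prob (E1 T) + prob (E2 T) + prob (E3 T) + prob (E4 T)) \<le> prob (G T)"
      using eventually_ge_at_top[of 1] by eventually_elim (rule bnd)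
    show "\<forall>\<^sub>F T in sequentially. prob (G T) \<le> 1" by simp
  qed
qed

end

theorem proposition3:
  fixes M :: "'a measure"
    and \<theta> :: "nat \<Rightarrow> 'a \<Rightarrow> real"
    and x y :: "nat \<Rightarrow> nat \<Rightarrow> 'a \<Rightarrow> real"
    and N K :: nat and \<phi>r \<sigma>r2 :: real
  assumes "prob_space M"
    and "N \<ge> 1" and "K \<ge> 1" and "\<sigma>r2 > 0"
    and indep: "prob_space.indep_vars M (\<lambda>_. borel) (obs_family \<theta> x y) (obs_indices N K)"
    and dist_task: "\<And>t. distributed M lborel (\<theta> t) (normal_density \<phi>r (sqrt \<sigma>r2))"
    and dist_tr: "\<And>t n. n < N \<Longrightarrow> distributed M lborel (\<lambda>\<omega>. x t n \<omega> - \<theta> t \<omega>) std_normal_density"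
    and dist_val: "\<And>t k. k < K \<Longrightarrow> distributed M lborel (\<lambda>\<omega>. y t k \<omega> - \<theta> t \<omega>) std_normal_density"
  shows "\<forall>\<epsilon>>0. (\<lambda>T. measure M {\<omega> \<in> space M.
            estimate_good N K (\<lambda>t n. x t n \<omega>) (\<lambda>t k. y t k \<omega>) T \<phi>r \<sigma>r2 \<epsilon>})
          \<longlonglongrightarrow> 1"
proof -
  interpret model M \<theta> x y N K \<phi>r \<sigma>r2
    by (intro model.intro model_axioms.intro) (use assms in auto)
  show ?thesis using main by blast
qed

end
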